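(* Let $h_{r,d},h_{r,u}$ be independent random variables such that $|h_{r,d}|^2$ and $|h_{r,u}|^2$ are exponentially distributed with mean $1$ (density $e^{-x}$, $x>0$); put $Z=|h_{r,d}|^2|h_{r,u}|^2$. Let $\delta,T,\Xi_{r,1},d_t,\alpha_r$ be positive constants and define $R_{est}:=\frac{\delta}{2T}\,\mathbb{E}\big[\log_2(1+\Xi_{r,1}d_t^{-\alpha_r}Z)\big]$. Then $$R_{est}=\frac{\delta}{2T\ln 2}\,G^{3,1}_{1,3}\!\left(d_t^{\alpha_r}\Xi_{r,1}^{-1}\,\middle|\,\begin{matrix}0\\ 0,0,1\end{matrix}\right).$$
   Context: This is the Rayleigh ($m=1$ Nakagami) case of the ergodic radar estimation information rate: $\delta$ is the radar duty factor, $T$ the pulse duration, $d_t$ the BS–target distance, $\alpha_r$ the radar path loss exponent, and $\Xi_{r,1}d_t^{-\alpha_r}Z$ plays the role of $2T\beta_{semi}B\gamma_r^{echo}$ in the rate bound $\frac{\delta}{2T}\log_2(1+2T\beta_{semi}B\gamma_r^{echo})$. $G^{m,n}_{p,q}\!\left(x\,\middle|\,\begin{matrix}a_1,\dots,a_p\\ b_1,\dots,b_q\end{matrix}\right)$ denotes the Meijer G-function. *)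

theory Defs
  imports "HOL-Probability.Probability"
begin

text \<open>Meijer G-function, via its Mellin--Barnes integral along a vertical line
  Re s = c which separates the poles of the Gamma(b_j - s), j < m (lying to the right)
  from the poles of the Gamma(1 - a_k + s), k < n (lying to the left).
  With s = c + i t we have ds = i dt, hence (1/(2 pi i)) int_L ... ds = (1/(2 pi)) int ... dt.\<close>

definition meijerG_integrand ::
  "nat \<Rightarrow> nat \<Rightarrow> complex list \<Rightarrow> complex list \<Rightarrow> real \<Rightarrow> complex \<Rightarrow> complex" where
  "meijerG_integrand m n as bs x s =
     ((\<Prod>j<m. Gamma (bs ! j - s)) * (\<Prod>k<n. Gamma (1 - as ! k + s)))
     / ((\<Prod>j\<in>{m..<length bs}. Gamma (1 - bs ! j + s)) * (\<Prod>k\<in>{n..<length as}. Gamma (as ! k - s)))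
     * (complex_of_real x powr s)"

definition meijerG_line ::
  "real \<Rightarrow> nat \<Rightarrow> nat \<Rightarrow> complex list \<Rightarrow> complex list \<Rightarrow> real \<Rightarrow> complex" where
  "meijerG_line c m n as bs x =
     complex_of_real (1 / (2 * pi)) *
       (\<integral>t. meijerG_integrand m n as bs x (Complex c t) \<partial>lborel)"

definition separating_line :: "real \<Rightarrow> nat \<Rightarrow> nat \<Rightarrow> complex list \<Rightarrow> complex list \<Rightarrow> bool" where
  "separating_line c m n as bs \<longleftrightarrow>
     (\<forall>j<m. c < Re (bs ! j)) \<and> (\<forall>k<n. Re (as ! k) - 1 < c)"

text \<open>G^{m,n}_{p,q}(x | as; bs) with p = length as, q = length bs.\<close>
definition meijerG :: "nat \<Rightarrow> nat \<Rightarrow> complex list \<Rightarrow> complex list \<Rightarrow> real \<Rightarrow> complex" where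
  "meijerG m n as bs x =
     meijerG_line (SOME c. separating_line c m n as bs) m n as bs x"

end

theory Submission
  imports Defs "HOL-Complex_Analysis.Complex_Analysis"
begin

lemma norm_sin_sq: "(norm (sin (Complex a b)))^2 = (sin a * cosh b)^2 + (cos a * sinh b)^2"
proof -
  have "(norm (sin (Complex a b)))^2 = (Re (sin (Complex a b)))^2 + (Im (sin (Complex a b)))^2"
    by (simp add: cmod_power2)
  also have "Re (sin (Complex a b)) = sin a * cosh b" by (simp add: Re_sin cosh_def)
  also have "Im (sin (Complex a b)) = cos a * sinh b" by (simp add: Im_sin sinh_def)
  finally show ?thesis .
qed

lemma norm_sin_ge1: "norm (sin (Complex a b)) \<ge> \<bar>sin a\<bar> * cosh b"
proof -
  have "(\<bar>sin a\<bar> * cosh b)^2 \<le> (norm (sin (Complex a b)))^2"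
    unfolding norm_sin_sq by (simp add: power_mult_distrib)
  then show ?thesis by (rule power2_le_imp_le) simp
qed

lemma norm_sin_ge2: "norm (sin (Complex a b)) \<ge> \<bar>sinh b\<bar>"
proof -
  have "(sin a * cosh b)^2 + (cos a * sinh b)^2 = (sin a)^2 * (cosh b)^2 + (cos a)^2 * (sinh b)^2"
    by (simp add: power_mult_distrib)
  also have "\<dots> \<ge> (sin a)^2 * (sinh b)^2 + (cos a)^2 * (sinh b)^2"
    by (intro add_mono mult_left_mono) (auto simp: cosh_square_eq)
  also have "(sin a)^2 * (sinh b)^2 + (cos a)^2 * (sinh b)^2 = (sinh b)^2"
    by (metis distrib_right mult_1 sin_cos_squared_add)
  finally have "\<bar>sinh b\<bar>^2 \<le> (norm (sin (Complex a b)))^2"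
    unfolding norm_sin_sq by simp
  then show ?thesis by (rule power2_le_imp_le) simp
qed

lemma cosh_ge_exp_abs: "exp \<bar>x\<bar> / 2 \<le> cosh (x::real)"
  by (cases "x \<ge> 0") (auto simp: cosh_def)

lemma integrable_exp_abs:
  fixes a :: real assumes a: "0 < a"
  shows "integrable lborel (\<lambda>t. exp (- (a * \<bar>t\<bar>)))"
proof (rule integrableI_nonneg)
  show "(\<lambda>t. exp (- (a * \<bar>t\<bar>))) \<in> borel_measurable lborel" by measurable
  show "AE x in lborel. 0 \<le> exp (- (a * \<bar>x\<bar>))" by simp
  have half: "(\<integral>\<^sup>+x. ennreal (exp (- (a * x))) * indicator {0..} x \<partial>lborel) = ennreal (1 / a)"
  proof -
    have "(\<integral>\<^sup>+x. ennreal (exp (- (a * x))) * indicator {0..} x \<partial>lborel)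
          = ennreal (0 - (- exp (- (a * 0)) / a))"
    proof (rule nn_integral_FTC_atLeast)
      show "(\<lambda>x. exp (- (a * x))) \<in> borel_measurable borel" by measurable
      fix x :: real
      show "((\<lambda>x. - exp (- (a * x)) / a) has_real_derivative exp (- (a * x))) (at x)"
        using a by (auto intro!: derivative_eq_intros)
      show "0 \<le> exp (- (a * x))" by simp
    next
      show "((\<lambda>x. - exp (- (a * x)) / a) \<longlongrightarrow> 0) at_top"
        using a by real_asymp
    qed
    also have "\<dots> = ennreal (1 / a)"
      by simp
    finally show ?thesis .
  qed
  have "(\<integral>\<^sup>+x. ennreal (exp (- (a * \<bar>x\<bar>))) \<partial>lborel) \<le>
        (\<integral>\<^sup>+x. ennreal (exp (- (a * x))) * indicator {0..} x
              + ennreal (exp (- (a * (0 + (-1) * x)))) * indicator {0..} (0 + (-1) * x) \<partial>lborel)"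
    by (intro nn_integral_mono) (auto split: split_indicator)
  also have "\<dots> = (\<integral>\<^sup>+x. ennreal (exp (- (a * x))) * indicator {0..} x \<partial>lborel)
           + (\<integral>\<^sup>+x. ennreal (exp (- (a * (0 + (-1) * x)))) * indicator {0..} (0 + (-1) * x) \<partial>lborel)"
    by (intro nn_integral_add) auto
  also have "(\<integral>\<^sup>+x. ennreal (exp (- (a * (0 + (-1) * x)))) * indicator {0..} (0 + (-1) * x) \<partial>lborel)
      = (\<integral>\<^sup>+x. ennreal (exp (- (a * x))) * indicator {0..} x \<partial>lborel)"
    using nn_integral_real_affine[of "\<lambda>x. ennreal (exp (- (a * x))) * indicator {0..} x" "-1" 0]
    by simp
  finally have "(\<integral>\<^sup>+x. ennreal (exp (- (a * \<bar>x\<bar>))) \<partial>lborel) \<le> ennreal (1/a) + ennreal (1/a)"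
    using half by simp
  also have "\<dots> < \<infinity>" by simp
  finally show "(\<integral>\<^sup>+x. ennreal (exp (- (a * \<bar>x\<bar>))) \<partial>lborel) < \<infinity>" .
qed

definition kf :: "real \<Rightarrow> complex \<Rightarrow> complex" where
  "kf L s = exp (s * of_real L) / sin (of_real pi * s)"

lemma pi_Complex: "of_real pi * Complex a b = Complex (pi*a) (pi*b)"
  by (simp add: complex_eq_iff)

lemma kf_shift: "kf L (s + 1) = - of_real (exp L) * kf L s"
proof -
  have "sin (of_real pi * (s + 1)) = - sin (of_real pi * s)"
    by (simp add: distrib_left sin_add flip: sin_of_real cos_of_real)
  moreover have "exp ((s + 1) * of_real L) = exp (s * of_real L) * of_real (exp L)"
    by (simp add: distrib_right exp_add flip: exp_of_real)
  ultimately show ?thesis unfolding kf_def by simp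
qed

lemma sin_pi_c_nz: assumes "-1 < c" "c < 0" shows "sin (pi * c) \<noteq> 0"
proof
  assume "sin (pi * c) = 0"
  moreover have "-pi < pi * c" using assms mult_strict_left_mono[of "-1" c pi] by simp
  moreover have "pi * c < pi" using assms mult_strict_left_mono[of c 1 pi] by simp
  ultimately have "pi * c = 0" using sin_eq_0_pi by blast
  with assms show False by simp
qed

lemma norm_kf_vert:
  assumes "sin (pi * c) \<noteq> 0"
  shows "norm (kf L (Complex c t)) \<le> exp (c * L) / (\<bar>sin (pi * c)\<bar> * cosh (pi * t))"
proof -
  have "norm (kf L (Complex c t)) = exp (c * L) / norm (sin (Complex (pi * c) (pi * t)))"
    unfolding kf_def pi_Complex by (simp add: norm_divide)
  also have "\<dots> \<le> exp (c * L) / (\<bar>sin (pi * c)\<bar> * cosh (pi * t))"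
  proof -
    have "0 < exp \<bar>pi * t\<bar> / 2" by simp
    then have "0 < cosh (pi * t)" using cosh_ge_exp_abs[of "pi * t"] by linarith
    then have "0 < \<bar>sin (pi * c)\<bar> * cosh (pi * t)" using assms by simp
    moreover have "0 < cmod (sin (Complex (pi * c) (pi * t)))"
      using calculation norm_sin_ge1[of "pi * c" "pi * t"] by linarith
    ultimately show ?thesis using norm_sin_ge1[of "pi * c" "pi * t"]
      by (intro divide_left_mono) auto
  qed
  finally show ?thesis .
qed

lemma sin_pi_nz:
  assumes "-1 < Re s" "Re s < 1" "s \<noteq> 0"
  shows "sin (of_real pi * s) \<noteq> 0"
proof
  assume "sin (of_real pi * s) = 0"
  then obtain n :: int where n: "of_real pi * s = of_real (n * pi)" by (auto simp: sin_eq_0)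
  then have "s = of_int n" by (simp add: field_simps)
  with assms show False by auto
qed

lemma kf_holo: "kf L holomorphic_on ({z. -1 < Re z} \<inter> {z. Re z < 1} - {0})"
  unfolding kf_def using sin_pi_nz by (auto intro!: holomorphic_intros)

lemma kf_cont_vert:
  assumes "-1 < c" "c < 0"
  shows "continuous_on UNIV (\<lambda>t. kf L (Complex c t))"
proof -
  have nz: "sin (of_real pi * (of_real c + of_real t * \<i>)) \<noteq> 0" for t
  proof -
    have "of_real c + of_real t * \<i> = Complex c t" by (simp add: complex_eq_iff)
    moreover have "Complex c t \<noteq> 0" using assms by (simp add: complex_eq_iff)
    ultimately show ?thesis using sin_pi_nz[of "Complex c t"] assms by simp
  qed
  have "continuous_on UNIV (\<lambda>t. kf L (of_real c + of_real t * \<i>))"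
    unfolding kf_def using nz
    by (auto intro!: continuous_intros simp: pi_Complex[symmetric] Complex_eq[symmetric])
  moreover have "(\<lambda>t. kf L (Complex c t)) = (\<lambda>t. kf L (of_real c + of_real t * \<i>))"
    by (intro ext arg_cong[where f="kf L"]) (simp add: complex_eq_iff)
  ultimately show ?thesis by metis
qed

lemma kf_integrable:
  assumes "-1 < c" "c < 0"
  shows "integrable lborel (\<lambda>t. kf L (Complex c t))"
proof (rule Bochner_Integration.integrable_bound)
  define K where "K = 2 * exp (c * L) / \<bar>sin (pi * c)\<bar>"
  have nz: "sin (pi * c) \<noteq> 0" using sin_pi_c_nz[OF assms] .
  show "integrable lborel (\<lambda>t. K * exp (- (pi * \<bar>t\<bar>)))"
    by (intro integrable_mult_right integrable_exp_abs) simp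
  show "(\<lambda>t. kf L (Complex c t)) \<in> borel_measurable lborel"
    using kf_cont_vert[OF assms] by (simp add: borel_measurable_continuous_onI)
  show "AE t in lborel. norm (kf L (Complex c t)) \<le> norm (K * exp (- (pi * \<bar>t\<bar>)))"
  proof (rule AE_I2)
    fix t :: real
    have "norm (kf L (Complex c t)) \<le> exp (c * L) / (\<bar>sin (pi * c)\<bar> * cosh (pi * t))"
      by (rule norm_kf_vert[OF nz])
    also have "\<dots> \<le> exp (c * L) / (\<bar>sin (pi * c)\<bar> * (exp \<bar>pi * t\<bar> / 2))"
      using nz cosh_ge_exp_abs[of "pi * t"]
      by (intro divide_left_mono mult_left_mono mult_pos_pos) auto
    also have "\<dots> = K * exp (- (pi * \<bar>t\<bar>))"
      unfolding K_def by (simp add: abs_mult exp_minus field_simps)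
    also have "\<dots> = norm (K * exp (- (pi * \<bar>t\<bar>)))"
      unfolding K_def by simp
    finally show "norm (kf L (Complex c t)) \<le> norm (K * exp (- (pi * \<bar>t\<bar>)))" .
  qed
qed

lemma norm_kf_horiz:
  assumes "\<bar>Re z\<bar> \<le> 1" "Im z \<noteq> 0"
  shows "norm (kf L z) \<le> exp \<bar>L\<bar> / \<bar>sinh (pi * Im z)\<bar>"
proof -
  have z: "z = Complex (Re z) (Im z)" by simp
  have "norm (kf L z) = exp (Re z * L) / norm (sin (Complex (pi * Re z) (pi * Im z)))"
    unfolding kf_def by (subst (1 2) z, subst pi_Complex) (simp add: norm_divide)
  also have "\<dots> \<le> exp \<bar>L\<bar> / \<bar>sinh (pi * Im z)\<bar>"
  proof (rule frac_le)
    have "Re z * L \<le> \<bar>Re z * L\<bar>" by simp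
    also have "\<dots> \<le> 1 * \<bar>L\<bar>" unfolding abs_mult using assms(1) by (intro mult_right_mono) auto
    finally show "exp (Re z * L) \<le> exp \<bar>L\<bar>" by simp
    show "0 < \<bar>sinh (pi * Im z)\<bar>" using assms(2) by simp
    show "\<bar>sinh (pi * Im z)\<bar> \<le> cmod (sin (Complex (pi * Re z) (pi * Im z)))"
      by (rule norm_sin_ge2)
  qed simp
  finally show ?thesis .
qed

lemma kf_residue: "residue (kf L) 0 = 1 / of_real pi"
proof -
  have "kf L = (\<lambda>w. exp (w * of_real L) / sin (of_real pi * w))"
    by (rule ext) (simp add: kf_def)
  moreover have "residue (\<lambda>w. exp (w * of_real L) / sin (of_real pi * w)) 0 = exp (0 * of_real L) / of_real pi"
    by (rule residue_simple_pole_deriv[where s=UNIV])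
       (auto intro!: holomorphic_intros derivative_eq_intros)
  ultimately show ?thesis by simp
qed

lemma kf_rect:
  assumes "-1 < c" "c < 0" "R > 0"
  shows "contour_integral (rectpath (Complex c (-R)) (Complex (c+1) R)) (kf L) = 2 * \<i>"
proof -
  define S where "S = {z. -1 < Re z} \<inter> {z. Re z < 1}"
  define a1 where "a1 = Complex c (-R)"
  define a3 where "a3 = Complex (c+1) R"
  have box: "0 \<in> box a1 a3" using assms by (auto simp: in_box_complex_iff a1_def a3_def)
  have cbox_sub: "cbox a1 a3 \<subseteq> S" using assms by (auto simp: in_cbox_complex_iff S_def a1_def a3_def)
  have le: "Re a1 \<le> Re a3" "Im a1 \<le> Im a3" using assms by (auto simp: a1_def a3_def)
  have pim: "path_image (rectpath a1 a3) \<subseteq> S - {0}"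
    using path_image_rectpath_cbox_minus_box[OF le] box cbox_sub by auto
  have "contour_integral (rectpath a1 a3) (kf L) =
        2 * pi * \<i> * (\<Sum>p\<in>{0}. winding_number (rectpath a1 a3) p * residue (kf L) p)"
  proof (rule Residue_theorem[where S=S])
    show "open S" unfolding S_def by (intro open_Int open_halfspace_Re_gt open_halfspace_Re_lt)
    show "connected S" unfolding S_def
      by (intro convex_connected convex_Int convex_halfspace_Re_gt convex_halfspace_Re_lt)
    show "kf L holomorphic_on S - {0}" unfolding S_def by (rule kf_holo)
    show "\<forall>z. z \<notin> S \<longrightarrow> winding_number (rectpath a1 a3) z = 0"
      using winding_number_rectpath_outside[OF le] cbox_sub by auto
  qed (use pim in auto)
  also have "\<dots> = 2 * \<i>"
    using winding_number_rectpath[OF box] by (simp add: kf_residue)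
  finally show ?thesis unfolding a1_def a3_def .
qed

lemma kf_cont_seg:
  assumes "closed_segment a b \<subseteq> {z. -1 < Re z} \<inter> {z. Re z < 1} - {0}"
  shows "continuous_on (closed_segment a b) (kf L)"
  using holomorphic_on_imp_continuous_on[OF kf_holo] assms by (rule continuous_on_subset)

lemma kf_rect_eq:
  assumes "-1 < c" "c < 0" "R > 0"
  shows "2 * \<i> = contour_integral (linepath (Complex c (-R)) (Complex (c+1) (-R))) (kf L)
               + contour_integral (linepath (Complex (c+1) R) (Complex c R)) (kf L)
               - \<i> * (1 + of_real (exp L)) * integral {-R..R} (\<lambda>t. kf L (Complex c t))"
proof -
  define a1 where "a1 = Complex c (-R)"
  define a2 where "a2 = Complex (c+1) (-R)"
  define a3 where "a3 = Complex (c+1) R"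
  define a4 where "a4 = Complex c R"
  define S where "S = {z. -1 < Re z} \<inter> {z. Re z < 1} - {0}"
  have cs: "closed_segment (c::real) (c+1) = {c..c+1}" by (simp add: closed_segment_eq_real_ivl)
  have cs2: "closed_segment (-R) R = {-R..R}" using assms by (simp add: closed_segment_eq_real_ivl)
  have s12: "closed_segment a1 a2 \<subseteq> S"
    using assms by (auto simp: a1_def a2_def S_def closed_segment_same_Im cs)
  have s23: "closed_segment a2 a3 \<subseteq> S"
    using assms by (auto simp: a3_def a2_def S_def closed_segment_same_Re cs2)
  have s34: "closed_segment a3 a4 \<subseteq> S"
    using assms by (auto simp: a3_def a4_def S_def closed_segment_same_Im closed_segment_commute cs)
  have s41: "closed_segment a4 a1 \<subseteq> S"
    using assms by (auto simp: a1_def a4_def S_def closed_segment_same_Re closed_segment_commute cs2)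
  have ci: "kf L contour_integrable_on linepath a b" if "closed_segment a b \<subseteq> S" for a b
    using that unfolding S_def by (intro contour_integrable_continuous_linepath kf_cont_seg)
  note ci12 = ci[OF s12] and ci23 = ci[OF s23] and ci34 = ci[OF s34] and ci41 = ci[OF s41]
  have "2 * \<i> = contour_integral (rectpath a1 a3) (kf L)"
    unfolding a1_def a3_def using kf_rect[OF assms] by simp
  also have "\<dots> = contour_integral (linepath a1 a2) (kf L) + (contour_integral (linepath a2 a3) (kf L)
      + (contour_integral (linepath a3 a4) (kf L) + contour_integral (linepath a4 a1) (kf L)))"
  proof -
    have r: "rectpath a1 a3 = linepath a1 a2 +++ linepath a2 a3 +++ linepath a3 a4 +++ linepath a4 a1"
      by (simp add: rectpath_def Let_def a1_def a2_def a3_def a4_def)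
    have j34: "kf L contour_integrable_on (linepath a3 a4 +++ linepath a4 a1)"
      using ci34 ci41 by (intro contour_integrable_joinI) auto
    have j24: "kf L contour_integrable_on (linepath a2 a3 +++ linepath a3 a4 +++ linepath a4 a1)"
      using ci23 j34 by (intro contour_integrable_joinI) auto
    show ?thesis unfolding r
      using ci12 ci23 ci34 ci41 j34 j24 by simp
  qed
  finally have eq: "2 * \<i> = contour_integral (linepath a1 a2) (kf L) + (contour_integral (linepath a2 a3) (kf L)
      + (contour_integral (linepath a3 a4) (kf L) + contour_integral (linepath a4 a1) (kf L)))" .
  define J where "J = integral {-R..R} (\<lambda>t. kf L (Complex c t))"
  have "((\<lambda>x. kf L (Complex (c+1) x)) has_integral (-\<i> * contour_integral (linepath a2 a3) (kf L))) {-R..R}"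
    using assms has_contour_integral_linepath_same_Re_iff[of a2 "c+1" a3 "-R" R "kf L"]
      has_contour_integral_integral[OF ci23] by (simp add: a2_def a3_def)
  moreover have "kf L (Complex (c+1) x) = - of_real (exp L) * kf L (Complex c x)" for x
  proof -
    have "Complex (c+1) x = Complex c x + 1" by (simp add: complex_eq_iff)
    then show ?thesis using kf_shift[of L "Complex c x"] by simp
  qed
  ultimately have "((\<lambda>x. (- of_real (exp L)) * kf L (Complex c x)) has_integral
         (-\<i> * contour_integral (linepath a2 a3) (kf L))) {-R..R}" by simp
  then have "((\<lambda>x. kf L (Complex c x)) has_integral
         (-\<i> * contour_integral (linepath a2 a3) (kf L)) / (- of_real (exp L))) {-R..R}"
    by (subst (asm) has_integral_mult_right_iff) auto
  then have "J = (-\<i> * contour_integral (linepath a2 a3) (kf L)) / (- of_real (exp L))"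
    unfolding J_def by (rule integral_unique)
  then have C2: "contour_integral (linepath a2 a3) (kf L) = - \<i> * of_real (exp L) * J"
    by (simp add: field_simps)
  have ci14: "kf L contour_integrable_on linepath a1 a4"
    using ci41 contour_integrable_reversepath_eq[of "linepath a4 a1"] valid_path_linepath
    by (metis reversepath_linepath)
  have "((\<lambda>x. kf L (Complex c x)) has_integral (-\<i> * contour_integral (linepath a1 a4) (kf L))) {-R..R}"
    using assms has_contour_integral_linepath_same_Re_iff[of a1 "c" a4 "-R" R "kf L"]
      has_contour_integral_integral[OF ci14] by (simp add: a1_def a4_def)
  then have "J = -\<i> * contour_integral (linepath a1 a4) (kf L)"
    unfolding J_def by (rule integral_unique)
  moreover have "contour_integral (linepath a4 a1) (kf L) = - contour_integral (linepath a1 a4) (kf L)"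
    using s41 unfolding S_def by (intro contour_integral_reverse_linepath kf_cont_seg)
  ultimately have C4: "contour_integral (linepath a4 a1) (kf L) = - \<i> * J"
    by (simp add: field_simps)
  show ?thesis using eq C2 C4 unfolding J_def[symmetric] a1_def a2_def a3_def a4_def
    by (simp add: algebra_simps)
qed

lemma kf_horiz_seg_bound:
  assumes "-1 < c" "c < 0" "R > 0" "y = R \<or> y = -R"
  shows "norm (contour_integral (linepath (Complex c y) (Complex (c+1) y)) (kf L)) \<le> exp \<bar>L\<bar> / sinh (pi * R)"
proof -
  have cs: "closed_segment (c::real) (c+1) = {c..c+1}" by (simp add: closed_segment_eq_real_ivl)
  have seg: "closed_segment (Complex c y) (Complex (c+1) y) = {z. Im z = y \<and> Re z \<in> {c..c+1}}"
    by (simp add: closed_segment_same_Im cs)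
  have y0: "y \<noteq> 0" using assms by auto
  have sub: "closed_segment (Complex c y) (Complex (c+1) y) \<subseteq> {z. -1 < Re z} \<inter> {z. Re z < 1} - {0}"
    using assms y0 unfolding seg by auto
  have sh: "\<bar>sinh (pi * y)\<bar> = sinh (pi * R)" using assms by auto
  show ?thesis
  proof -
    have "norm (contour_integral (linepath (Complex c y) (Complex (c+1) y)) (kf L))
          \<le> exp \<bar>L\<bar> / sinh (pi * R) * norm (Complex (c+1) y - Complex c y)"
    proof (rule contour_integral_bound_linepath)
      show "kf L contour_integrable_on linepath (Complex c y) (Complex (c + 1) y)"
        by (intro contour_integrable_continuous_linepath kf_cont_seg sub)
      show "0 \<le> exp \<bar>L\<bar> / sinh (pi * R)" using assms by simp
      fix z assume "z \<in> closed_segment (Complex c y) (Complex (c + 1) y)"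
      then have "Im z = y" "c \<le> Re z" "Re z \<le> c + 1" unfolding seg by auto
      then have "norm (kf L z) \<le> exp \<bar>L\<bar> / \<bar>sinh (pi * Im z)\<bar>"
        using assms y0 by (intro norm_kf_horiz) auto
      then show "norm (kf L z) \<le> exp \<bar>L\<bar> / sinh (pi * R)" using \<open>Im z = y\<close> sh by simp
    qed
    also have "Complex (c+1) y - Complex c y = 1" by (simp add: complex_eq_iff)
    finally show ?thesis by simp
  qed
qed

lemma kf_horiz_seg_bound':
  assumes "-1 < c" "c < 0" "R > 0"
  shows "norm (contour_integral (linepath (Complex (c+1) R) (Complex c R)) (kf L)) \<le> exp \<bar>L\<bar> / sinh (pi * R)"
proof -
  have cs: "closed_segment (c::real) (c+1) = {c..c+1}" by (simp add: closed_segment_eq_real_ivl)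
  have sub: "closed_segment (Complex c R) (Complex (c+1) R) \<subseteq> {z. -1 < Re z} \<inter> {z. Re z < 1} - {0}"
    using assms by (auto simp: closed_segment_same_Im cs)
  have "contour_integral (linepath (Complex (c+1) R) (Complex c R)) (kf L)
       = - contour_integral (linepath (Complex c R) (Complex (c+1) R)) (kf L)"
    using sub by (subst contour_integral_reverse_linepath) (auto intro!: kf_cont_seg simp: closed_segment_commute)
  then show ?thesis using kf_horiz_seg_bound[OF assms, of R L] by simp
qed

theorem kf_integral:
  assumes "-1 < c" "c < 0"
  shows "(\<integral>t. kf L (Complex c t) \<partial>lborel) = - 2 / (1 + of_real (exp L))"
proof -
  define g where "g = (\<lambda>t. kf L (Complex c t))"
  define J where "J = (\<integral>t. g t \<partial>lborel)"
  have int: "integrable lborel g" unfolding g_def by (rule kf_integrable[OF assms])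
  have gm: "g \<in> borel_measurable lborel" using int by auto
  have "((\<lambda>R. (\<integral>t. indicator {-R..R} t *\<^sub>R g t \<partial>lborel)) \<longlongrightarrow> J) at_top"
    unfolding J_def
  proof (rule integral_dominated_convergence_at_top[where w="\<lambda>t. norm (g t)"])
    show "g \<in> borel_measurable lborel" by fact
    show "(\<lambda>t. indicator {-R..R} t *\<^sub>R g t) \<in> borel_measurable lborel" for R using gm by measurable
    show "integrable lborel (\<lambda>t. norm (g t))" using int by auto
    show "AE x in lborel. ((\<lambda>R. indicator {-R..R} x *\<^sub>R g x) \<longlongrightarrow> g x) at_top"
    proof (rule AE_I2)
      fix x :: real
      have "eventually (\<lambda>R. indicator {-R..R} x *\<^sub>R g x = g x) at_top"
        using eventually_ge_at_top[of "\<bar>x\<bar>"] by eventually_elim (auto simp: indicator_def)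
      then show "((\<lambda>R. indicator {-R..R} x *\<^sub>R g x) \<longlongrightarrow> g x) at_top"
        by (rule tendsto_eventually)
    qed
    show "\<forall>\<^sub>F R in at_top. AE x in lborel. norm (indicator {-R..R} x *\<^sub>R g x) \<le> norm (g x)"
      by (intro always_eventually allI AE_I2) (auto simp: indicator_def)
  qed
  moreover have "(\<integral>t. indicator {-R..R} t *\<^sub>R g t \<partial>lborel) = integral {-R..R} g" for R
  proof -
    have "set_integrable lborel {-R..R} g"
      unfolding set_integrable_def using int by (intro integrable_mult_indicator) auto
    from set_borel_integral_eq_integral(2)[OF this] show ?thesis
      by (simp add: set_lebesgue_integral_def)
  qed
  ultimately have limJ: "((\<lambda>R. integral {-R..R} g) \<longlongrightarrow> J) at_top" by simp
  define C1 where "C1 = (\<lambda>R. contour_integral (linepath (Complex c (-R)) (Complex (c+1) (-R))) (kf L))"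
  define C3 where "C3 = (\<lambda>R. contour_integral (linepath (Complex (c+1) R) (Complex c R)) (kf L))"
  have lim0: "((\<lambda>R. exp \<bar>L\<bar> / sinh (pi * R)) \<longlongrightarrow> 0) at_top" by real_asymp
  have limC1: "(C1 \<longlongrightarrow> 0) at_top"
    by (rule Lim_null_comparison[OF _ lim0])
       (use eventually_gt_at_top[of 0] in \<open>eventually_elim, use kf_horiz_seg_bound[OF assms] in \<open>auto simp: C1_def\<close>\<close>)
  have limC3: "(C3 \<longlongrightarrow> 0) at_top"
    by (rule Lim_null_comparison[OF _ lim0])
       (use eventually_gt_at_top[of 0] in \<open>eventually_elim, use kf_horiz_seg_bound'[OF assms] in \<open>auto simp: C3_def\<close>\<close>)
  define D where "D = \<i> * (1 + of_real (exp L))"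
  have E0: "(1 + of_real (exp L) :: complex) \<noteq> 0"
  proof
    assume "(1 + of_real (exp L) :: complex) = 0"
    then have "Re (1 + of_real (exp L) :: complex) = 0" by simp
    moreover have "Re (1 + of_real (exp L) :: complex) > 0" by simp (metis add_pos_pos exp_gt_zero zero_less_one)
    ultimately show False by simp
  qed
  then have D0: "D \<noteq> 0" by (simp add: D_def)
  have "((\<lambda>R. (C1 R + C3 R - 2 * \<i>) / D) \<longlongrightarrow> (0 + 0 - 2 * \<i>) / D) at_top"
    using D0 by (intro tendsto_intros limC1 limC3)
  moreover have "eventually (\<lambda>R. (C1 R + C3 R - 2 * \<i>) / D = integral {-R..R} g) at_top"
    using eventually_gt_at_top[of 0]
  proof eventually_elim
    case (elim R)
    from kf_rect_eq[OF assms elim, of L] show ?case using D0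
      by (simp add: C1_def C3_def D_def g_def field_simps)
  qed
  ultimately have "((\<lambda>R. integral {-R..R} g) \<longlongrightarrow> (0 + 0 - 2 * \<i>) / D) at_top"
    by (rule Lim_transform_eventually)
  with limJ have "J = (0 + 0 - 2 * \<i>) / D" by (rule tendsto_unique[rotated 1]) simp
  also have "\<dots> = \<i> * (- 2) / (\<i> * (1 + of_real (exp L)))" unfolding D_def by simp
  also have "\<dots> = - 2 / (1 + of_real (exp L))" by (rule mult_divide_mult_cancel_left) simp
  finally show ?thesis unfolding J_def g_def .
qed


definition phi :: "real \<Rightarrow> real \<Rightarrow> complex \<Rightarrow> complex" where
  "phi a u s = of_real (indicator {0<..} u) * exp ((of_real a - s) * of_real (ln u)) * of_real (exp (-u))"

lemma cpowr_pos: "0 < u \<Longrightarrow> complex_of_real u powr w = exp (w * of_real (ln u))"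
  by (simp add: powr_def Ln_of_real)

lemma norm_phi: "norm (phi a u s) = indicator {0<..} u * u powr (a - Re s) * exp (-u)"
  by (cases "u > 0") (auto simp: phi_def norm_mult powr_def indicator_def)

lemma phi_meas [measurable]:
  "(\<lambda>p. phi a (f p) (g p)) \<in> borel_measurable M"
  if [measurable]: "f \<in> borel_measurable M" "g \<in> borel_measurable M"
  unfolding phi_def by measurable

lemma Complex_meas [measurable]: "(\<lambda>t. Complex c t) \<in> borel_measurable borel"
  by (simp add: Complex_eq)

lemma phi_has_integral:
  assumes "a - Re s > -1"
  shows "has_bochner_integral lborel (\<lambda>u. phi a u s) (Gamma (of_real a + 1 - s))"
proof -
  define z where "z = of_real a + 1 - s"
  have z: "Re z > 0" using assms by (simp add: z_def)
  define f where "f = (\<lambda>t. complex_of_real t powr (z - 1) / of_real (exp t))"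
  have hi: "(f has_integral Gamma z) {0<..}"
    unfolding f_def by (rule Gamma_integral_complex'[OF z])
  have eqp: "indicator {0<..} u *\<^sub>R f u = phi a u s" for u
    by (cases "u > 0") (simp_all add: phi_def f_def cpowr_pos z_def exp_minus field_simps scaleR_conv_of_real)
  have bint: "integrable lborel (\<lambda>t. indicator {0..} t * t powr (Re z - 1) / exp t)"
  proof (rule integrableI_nonneg)
    show "(\<lambda>t. indicator {0..} t * t powr (Re z - 1) / exp t) \<in> borel_measurable lborel" by measurable
    show "AE x in lborel. 0 \<le> indicator {0..} x * x powr (Re z - 1) / exp x" by (simp add: indicator_def)
    show "(\<integral>\<^sup>+ x. ennreal (indicator {0..} x * x powr (Re z - 1) / exp x) \<partial>lborel) < \<infinity>"
      using Gamma_conv_nn_integral_real[of "Re z"] z by (simp flip: Gamma_conv_nn_integral_real)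
  qed
  have si: "set_integrable lborel {0<..} f"
    unfolding set_integrable_def
  proof (rule Bochner_Integration.integrable_bound[OF bint])
    show "(\<lambda>x. indicator {0<..} x *\<^sub>R f x) \<in> borel_measurable lborel" unfolding eqp by measurable
    show "AE x in lborel. norm (indicator {0<..} x *\<^sub>R f x) \<le> norm (indicator {0..} x * x powr (Re z - 1) / exp x)"
      by (intro AE_I2) (auto simp: f_def indicator_def norm_divide norm_powr_real_powr)
  qed
  have "(LINT u:{0<..}|lborel. f u) = integral {0<..} f"
    by (rule set_borel_integral_eq_integral(2)[OF si])
  also have "\<dots> = Gamma z" using hi by (rule integral_unique)
  finally have "has_bochner_integral lborel (\<lambda>u. indicator {0<..} u *\<^sub>R f u) (Gamma z)"
    using si unfolding set_integrable_def set_lebesgue_integral_def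
    by (simp add: has_bochner_integral_iff)
  with eqp have "has_bochner_integral lborel (\<lambda>u. phi a u s) (Gamma z)" by simp
  then show ?thesis unfolding z_def by simp
qed

lemma integrable_pair_mult:
  fixes a b :: "real \<Rightarrow> real"
  assumes ai: "integrable lborel a" and bi: "integrable lborel b"
  shows "integrable (lborel \<Otimes>\<^sub>M lborel) (\<lambda>p. a (fst p) * b (snd p))"
proof (rule lborel_pair.Fubini_integrable)
  have [measurable]: "a \<in> borel_measurable borel" "b \<in> borel_measurable borel" using ai bi by auto
  show "(\<lambda>p. a (fst p) * b (snd p)) \<in> borel_measurable (lborel \<Otimes>\<^sub>M lborel)" by measurable
  show "integrable lborel (\<lambda>x. \<integral>y. norm (a (fst (x, y)) * b (snd (x, y))) \<partial>lborel)"
  proof -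
    have "(\<lambda>x. \<integral>y. norm (a (fst (x, y)) * b (snd (x, y))) \<partial>lborel) = (\<lambda>x. \<bar>a x\<bar> * (\<integral>y. \<bar>b y\<bar> \<partial>lborel))"
      by (simp add: abs_mult)
    then show ?thesis using ai by (simp add: integrable_mult_left)
  qed
  show "AE x in lborel. integrable lborel (\<lambda>y. a (fst (x, y)) * b (snd (x, y)))"
    using bi by simp
qed

lemma fubini_swap:
  fixes A :: "real \<Rightarrow> complex" and k :: "real \<Rightarrow> real \<Rightarrow> complex" and kk :: "real \<Rightarrow> real"
  assumes Am [measurable]: "A \<in> borel_measurable borel"
    and km [measurable]: "(\<lambda>p. k (snd p) (fst p)) \<in> borel_measurable (lborel \<Otimes>\<^sub>M lborel)"
    and Ai: "integrable lborel (\<lambda>t. norm (A t))"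
    and k0i: "integrable lborel kk"
    and kb: "\<And>u t. norm (k u t) \<le> kk u"
  shows "(\<integral>t. A t * (\<integral>u. k u t \<partial>lborel) \<partial>lborel) = (\<integral>u. (\<integral>t. A t * k u t \<partial>lborel) \<partial>lborel)"
proof -
  have int: "integrable (lborel \<Otimes>\<^sub>M lborel) (\<lambda>p. A (fst p) * k (snd p) (fst p))"
  proof (rule Bochner_Integration.integrable_bound[OF integrable_pair_mult[OF Ai k0i]])
    show "(\<lambda>p. A (fst p) * k (snd p) (fst p)) \<in> borel_measurable (lborel \<Otimes>\<^sub>M lborel)" by measurable
    show "AE p in lborel \<Otimes>\<^sub>M lborel. norm (A (fst p) * k (snd p) (fst p)) \<le> norm (norm (A (fst p)) * kk (snd p))"
    proof (rule AE_I2)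
      fix p :: "real \<times> real"
      have "0 \<le> kk (snd p)" using kb[of "snd p" 0] norm_ge_zero order_trans by blast
      then show "norm (A (fst p) * k (snd p) (fst p)) \<le> norm (norm (A (fst p)) * kk (snd p))"
        using kb[of "snd p" "fst p"] by (simp add: norm_mult abs_mult mult_left_mono)
    qed
  qed
  then have int': "integrable (lborel \<Otimes>\<^sub>M lborel) (case_prod (\<lambda>t u. A t * k u t))"
    by (simp add: split_beta')
  have "(\<integral>u. (\<integral>t. A t * k u t \<partial>lborel) \<partial>lborel) = (\<integral>t. (\<integral>u. A t * k u t \<partial>lborel) \<partial>lborel)"
    by (rule lborel_pair.Fubini_integral[OF int'])
  also have "\<dots> = (\<integral>t. A t * (\<integral>u. k u t \<partial>lborel) \<partial>lborel)"
    by simp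
  finally show ?thesis by simp
qed


lemma integrand_eq:
  "meijerG_integrand 3 1 [0] [0, 0, 1] x s =
     Gamma (- s) * Gamma (- s) * Gamma (1 - s) * Gamma (1 + s) * (complex_of_real x powr s)"
  by (simp add: meijerG_integrand_def numeral_3_eq_3 lessThan_Suc)

lemma not_nonpos_Int: "Re z > 0 \<Longrightarrow> z \<notin> \<int>\<^sub>\<le>\<^sub>0"
  by (auto elim!: nonpos_Ints_cases)

lemma Gamma_line_cont:
  assumes "a - c > -1"
  shows "continuous_on UNIV (\<lambda>t. Gamma (of_real a + 1 - Complex c t))"
proof -
  have "continuous_on UNIV (\<lambda>t. Gamma (of_real a + 1 - (of_real c + of_real t * \<i>)))"
  proof (rule continuous_on_compose2[of "{z. Re z > 0}" Gamma])
    show "continuous_on {z. Re z > 0} Gamma"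
      by (rule continuous_on_Gamma) (auto dest: not_nonpos_Int)
    show "continuous_on UNIV (\<lambda>t. of_real a + 1 - (of_real c + of_real t * \<i>))"
      by (intro continuous_intros)
    show "(\<lambda>t. of_real a + 1 - (of_real c + of_real t * \<i>)) ` UNIV \<subseteq> {z. Re z > 0}"
      using assms by auto
  qed
  moreover have "(\<lambda>t. Gamma (of_real a + 1 - Complex c t)) = (\<lambda>t. Gamma (of_real a + 1 - (of_real c + of_real t * \<i>)))"
    by (intro ext arg_cong[where f=Gamma]) (simp add: complex_eq_iff)
  ultimately show ?thesis by metis
qed

lemma Gamma_line_bound:
  assumes "a - c > -1"
  shows "norm (Gamma (of_real a + 1 - Complex c t)) \<le> (\<integral>u. norm (phi a u (Complex c 0)) \<partial>lborel)"
proof -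
  have hb: "has_bochner_integral lborel (\<lambda>u. phi a u (Complex c t)) (Gamma (of_real a + 1 - Complex c t))"
    using assms by (intro phi_has_integral) simp
  then have "Gamma (of_real a + 1 - Complex c t) = (\<integral>u. phi a u (Complex c t) \<partial>lborel)"
    by (simp add: has_bochner_integral_integral_eq)
  also have "norm \<dots> \<le> (\<integral>u. norm (phi a u (Complex c t)) \<partial>lborel)"
    by (rule integral_norm_bound)
  also have "\<dots> = (\<integral>u. norm (phi a u (Complex c 0)) \<partial>lborel)"
    by (simp add: norm_phi)
  finally show ?thesis .
qed

lemma phi_norm_integrable:
  assumes "a - c > -1"
  shows "integrable lborel (\<lambda>u. norm (phi a u (Complex c t)))"
proof -
  have "integrable lborel (\<lambda>u. phi a u (Complex c t))"
    using phi_has_integral[of a "Complex c t"] assms has_bochner_integral_iff by auto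
  then show ?thesis by (rule integrable_norm)
qed

lemma kf_meas [measurable]: "(\<lambda>t. kf L (Complex c t)) \<in> borel_measurable borel"
  if "-1 < c" "c < 0"
  using kf_cont_vert[OF that] by (rule borel_measurable_continuous_onI)

lemma kf_times_bounded_integrable:
  assumes c: "-1 < c" "c < 0" and Bm: "B \<in> borel_measurable borel" and Bb: "\<And>t. norm (B t) \<le> K"
  shows "integrable lborel (\<lambda>t. norm (kf L (Complex c t) * B t))"
proof (rule Bochner_Integration.integrable_bound)
  show "integrable lborel (\<lambda>t. K * norm (kf L (Complex c t)))"
    using kf_integrable[OF c] by (intro integrable_mult_right integrable_norm)
  show "(\<lambda>t. norm (kf L (Complex c t) * B t)) \<in> borel_measurable lborel"
    using c Bm by measurable
  show "AE t in lborel. norm (norm (kf L (Complex c t) * B t)) \<le> norm (K * norm (kf L (Complex c t)))"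
  proof (rule AE_I2)
    fix t
    have K: "0 \<le> K" using Bb[of t] norm_ge_zero order_trans by blast
    show "norm (norm (kf L (Complex c t) * B t)) \<le> norm (K * norm (kf L (Complex c t)))"
      using Bb[of t] K mult_right_mono[of "norm (B t)" K "norm (kf L (Complex c t))"]
      by (simp add: norm_mult abs_mult mult.commute)
  qed
qed

definition H :: "real \<Rightarrow> real \<Rightarrow> real \<Rightarrow> real" where
  "H x u v = indicator {0<..} u * indicator {0<..} v * exp (-u) * exp (-v) * v / (u * v + x)"

lemma exp3: "exp (s * a) * exp ((0 - s) * b) * exp ((-1 - s) * d) = exp (s * (a - b - d)) * exp (- d :: complex)"
proof -
  have "exp (s * a) * exp ((0 - s) * b) * exp ((-1 - s) * d) = exp (s * a + (0 - s) * b + (-1 - s) * d)"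
    by (simp only: mult_exp_exp)
  also have "s * a + (0 - s) * b + (-1 - s) * d = s * (a - b - d) + (- d)" by (simp add: algebra_simps)
  also have "exp \<dots> = exp (s * (a - b - d)) * exp (- d)" by (simp only: mult_exp_exp)
  finally show ?thesis .
qed

lemma inner_t:
  assumes c: "-1 < c" "c < 0" and x: "0 < x"
  shows "(\<integral>t. (- of_real pi * kf (ln x) (Complex c t)) * phi 0 v (Complex c t) * phi (-1) u (Complex c t) \<partial>lborel)
         = of_real (2 * pi * H x u v)"
proof (cases "0 < u \<and> 0 < v")
  case True
  then have u: "0 < u" and v: "0 < v" by auto
  define K where "K = - pi * exp (-u) * exp (-v) / u"
  define L where "L = ln x - ln v - ln u"
  have pw: "(- of_real pi * kf (ln x) s) * phi 0 v s * phi (-1) u s = of_real K * kf L s" for s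
  proof -
    have e: "exp (- (of_real (ln u))) = (1 / of_real u :: complex)"
      using u by (simp add: exp_minus exp_of_real inverse_eq_divide)
    have "(- of_real pi * kf (ln x) s) * phi 0 v s * phi (-1) u s
        = - of_real pi * of_real (exp (-v)) * of_real (exp (-u)) / sin (of_real pi * s) *
          (exp (s * of_real (ln x)) * exp ((0 - s) * of_real (ln v)) * exp ((-1 - s) * of_real (ln u)))"
      using u v by (simp add: kf_def phi_def)
    also have "\<dots> = - of_real pi * of_real (exp (-v)) * of_real (exp (-u)) / sin (of_real pi * s) *
          (exp (s * of_real L) * (1 / of_real u))"
      by (subst exp3) (simp add: L_def e)
    also have "\<dots> = of_real K * kf L s"
      by (simp add: K_def kf_def mult_ac)
    finally show ?thesis .
  qed
  have "(\<integral>t. (- of_real pi * kf (ln x) (Complex c t)) * phi 0 v (Complex c t) * phi (-1) u (Complex c t) \<partial>lborel)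
      = (\<integral>t. of_real K * kf L (Complex c t) \<partial>lborel)"
    by (simp only: pw)
  also have "\<dots> = of_real K * (- 2 / (1 + of_real (exp L)))"
    by (simp add: kf_integral[OF c])
  also have "exp L = x / (v * u)" using x u v by (simp add: L_def exp_diff)
  also have "of_real K * (- 2 / (1 + complex_of_real (x / (v * u)))) = of_real (K * (- 2 / (1 + x / (v * u))))"
    by simp
  also have "K * (- 2 / (1 + x / (v * u))) = 2 * pi * H x u v"
    using x u v by (simp add: K_def H_def field_simps)
  finally show ?thesis .
next
  case False
  then have "(\<lambda>t. (- of_real pi * kf (ln x) (Complex c t)) * phi 0 v (Complex c t) * phi (-1) u (Complex c t)) = (\<lambda>t. 0)"
    by (auto simp: phi_def indicator_def)
  moreover have "H x u v = 0" using False by (auto simp: H_def indicator_def)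
  ultimately show ?thesis by simp
qed

lemma integrand_eq2:
  assumes x: "0 < x"
  shows "meijerG_integrand 3 1 [0] [0, 0, 1] x s =
     ((- of_real pi * kf (ln x) s) * Gamma (of_real (-1) + 1 - s)) * Gamma (of_real 0 + 1 - s)"
proof -
  have r: "Gamma (- s) * Gamma (1 + s) = - of_real pi / sin (of_real pi * s)"
    using Gamma_reflection_complex[of "- s"] by simp
  have "meijerG_integrand 3 1 [0] [0, 0, 1] x s =
        (Gamma (- s) * Gamma (1 + s)) * (complex_of_real x powr s) * Gamma (- s) * Gamma (1 - s)"
    by (subst integrand_eq) (simp add: mult_ac)
  also have "\<dots> = ((- of_real pi * kf (ln x) s) * Gamma (- s)) * Gamma (1 - s)"
    unfolding r using x by (simp add: kf_def cpowr_pos)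
  finally show ?thesis by simp
qed

lemma lhs_integral:
  assumes c: "-1 < c" "c < 0" and x: "0 < x"
  shows "(\<integral>t. meijerG_integrand 3 1 [0] [0, 0, 1] x (Complex c t) \<partial>lborel)
         = of_real (2 * pi * (\<integral>v. (\<integral>u. H x u v \<partial>lborel) \<partial>lborel))"
proof -
  define P where "P = (\<lambda>t. - of_real pi * kf (ln x) (Complex c t))"
  define Gm where "Gm = (\<lambda>t. Gamma (of_real (-1) + 1 - Complex c t))"
  define G1 where "G1 = (\<integral>u. norm (phi (-1) u (Complex c 0)) \<partial>lborel)"
  define k0 where "k0 = (\<lambda>v. norm (phi 0 v (Complex c 0)))"
  have Pm [measurable]: "P \<in> borel_measurable borel" unfolding P_def using c by measurable
  have Gmm [measurable]: "Gm \<in> borel_measurable borel"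
    unfolding Gm_def using c by (intro borel_measurable_continuous_onI Gamma_line_cont) simp
  have Gmb: "norm (Gm t) \<le> G1" for t
    unfolding Gm_def G1_def using c by (intro Gamma_line_bound) simp
  have k0i: "integrable lborel k0" unfolding k0_def using c by (intro phi_norm_integrable) simp
  have kb0: "norm (phi a v (Complex c t)) \<le> norm (phi a v (Complex c 0))" for a v t
    by (simp add: norm_phi)
  have step1: "(\<integral>t. (P t * Gm t) * (\<integral>v. phi 0 v (Complex c t) \<partial>lborel) \<partial>lborel)
        = (\<integral>v. (\<integral>t. (P t * Gm t) * phi 0 v (Complex c t) \<partial>lborel) \<partial>lborel)"
  proof (rule fubini_swap[where kk=k0])
    show "(\<lambda>t. P t * Gm t) \<in> borel_measurable borel" by measurable
    show "(\<lambda>p. phi 0 (snd p) (Complex c (fst p))) \<in> borel_measurable (lborel \<Otimes>\<^sub>M lborel)" by measurable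
    have "integrable lborel (\<lambda>t. norm (kf (ln x) (Complex c t) * (- of_real pi * Gm t)))"
      by (rule kf_times_bounded_integrable[OF c, where K="pi * G1"]) (use Gmb in \<open>auto simp: norm_mult\<close>)
    then show "integrable lborel (\<lambda>t. norm (P t * Gm t))" by (simp add: P_def norm_mult mult_ac)
    show "integrable lborel k0" by fact
    show "norm (phi 0 v (Complex c t)) \<le> k0 v" for v t unfolding k0_def by (rule kb0)
  qed
  have step2: "(\<integral>t. (P t * Gm t) * phi 0 v (Complex c t) \<partial>lborel)
      = (\<integral>u. (\<integral>t. (P t * phi 0 v (Complex c t)) * phi (-1) u (Complex c t) \<partial>lborel) \<partial>lborel)" for v
  proof -
    have "(\<integral>t. (P t * Gm t) * phi 0 v (Complex c t) \<partial>lborel)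
        = (\<integral>t. (P t * phi 0 v (Complex c t)) * (\<integral>u. phi (-1) u (Complex c t) \<partial>lborel) \<partial>lborel)"
    proof -
      have "(\<integral>u. phi (-1) u (Complex c t) \<partial>lborel) = Gm t" for t
        unfolding Gm_def using c by (intro has_bochner_integral_integral_eq phi_has_integral) simp
      then show ?thesis by (simp add: mult_ac)
    qed
    also have "\<dots> = (\<integral>u. (\<integral>t. (P t * phi 0 v (Complex c t)) * phi (-1) u (Complex c t) \<partial>lborel) \<partial>lborel)"
    proof (rule fubini_swap[where kk="\<lambda>u. norm (phi (-1) u (Complex c 0))"])
      show "(\<lambda>t. P t * phi 0 v (Complex c t)) \<in> borel_measurable borel" by measurable
      show "(\<lambda>p. phi (-1) (snd p) (Complex c (fst p))) \<in> borel_measurable (lborel \<Otimes>\<^sub>M lborel)" by measurable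
      have "integrable lborel (\<lambda>t. norm (kf (ln x) (Complex c t) * (- of_real pi * phi 0 v (Complex c t))))"
        by (rule kf_times_bounded_integrable[OF c, where K="pi * k0 v"])
           (use kb0 in \<open>auto simp: norm_mult k0_def\<close>)
      then show "integrable lborel (\<lambda>t. norm (P t * phi 0 v (Complex c t)))" by (simp add: P_def norm_mult mult_ac)
      show "integrable lborel (\<lambda>u. norm (phi (-1) u (Complex c 0)))" using c by (intro phi_norm_integrable) simp
      show "norm (phi (-1) u (Complex c t)) \<le> norm (phi (-1) u (Complex c 0))" for u t by (rule kb0)
    qed
    finally show ?thesis .
  qed
  have "(\<integral>t. meijerG_integrand 3 1 [0] [0, 0, 1] x (Complex c t) \<partial>lborel)
      = (\<integral>t. (P t * Gm t) * (\<integral>v. phi 0 v (Complex c t) \<partial>lborel) \<partial>lborel)"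
  proof -
    have "(\<integral>v. phi 0 v (Complex c t) \<partial>lborel) = Gamma (of_real 0 + 1 - Complex c t)" for t
      using c by (intro has_bochner_integral_integral_eq phi_has_integral) simp
    then show ?thesis unfolding integrand_eq2[OF x] by (simp add: P_def Gm_def)
  qed
  also have "\<dots> = (\<integral>v. (\<integral>u. (\<integral>t. (P t * phi 0 v (Complex c t)) * phi (-1) u (Complex c t) \<partial>lborel) \<partial>lborel) \<partial>lborel)"
    unfolding step1 step2 ..
  also have "\<dots> = (\<integral>v. (\<integral>u. complex_of_real (2 * pi * H x u v) \<partial>lborel) \<partial>lborel)"
    using inner_t[OF c x] by (simp add: P_def)
  also have "\<dots> = of_real (2 * pi * (\<integral>v. (\<integral>u. H x u v \<partial>lborel) \<partial>lborel))"
    by simp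
  finally show ?thesis .
qed


lemma ln_as_nn:
  assumes a: "0 \<le> a" and x: "0 < x" and b: "0 \<le> b"
  shows "ennreal (ln (1 + a * b / x)) = (\<integral>\<^sup>+w. ennreal (indicator {0..b} w * (a / (x + a * w))) \<partial>lborel)"
proof -
  have "((\<lambda>w. a / (x + a * w)) has_integral (ln (1 + a * b / x) - ln (1 + a * 0 / x))) {0..b}"
  proof (rule fundamental_theorem_of_calculus[OF b])
    fix w assume w: "w \<in> {0..b}"
    have pos: "0 < 1 + a * w / x" using a x w by (auto intro: add_pos_nonneg)
    have "((\<lambda>w. ln (1 + a * w / x)) has_real_derivative (a / x) / (1 + a * w / x)) (at w within {0..b})"
      using pos x by (auto intro!: derivative_eq_intros)
    moreover have "(a / x) / (1 + a * w / x) = a / (x + a * w)" using x pos by (simp add: field_simps)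
    ultimately have "((\<lambda>w. ln (1 + a * w / x)) has_real_derivative a / (x + a * w)) (at w within {0..b})"
      by metis
    then show "((\<lambda>w. ln (1 + a * w / x)) has_vector_derivative a / (x + a * w)) (at w within {0..b})"
      by (rule has_real_derivative_iff_has_vector_derivative[THEN iffD1])
  qed
  then have "integral\<^sup>N lborel (\<lambda>w. indicator {0..b} w * (a / (x + a * w))) = ln (1 + a * b / x)"
    using a x by (intro nn_integral_has_integral_lebesgue) auto
  then show ?thesis by simp
qed

lemma exp_tail:
  assumes "0 \<le> w"
  shows "(\<integral>\<^sup>+b. ennreal (exp (- b)) * indicator {w..} b \<partial>lborel) = ennreal (exp (- w))"
proof -
  have "(\<integral>\<^sup>+b. ennreal (exp (- b)) * indicator {w..} b \<partial>lborel) = ennreal (0 - (- exp (- w)))"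
  proof (rule nn_integral_FTC_atLeast)
    show "(\<lambda>b. exp (- b :: real)) \<in> borel_measurable borel"
      by (intro borel_measurable_continuous_onI continuous_intros)
    fix b :: real
    show "((\<lambda>b. - exp (- b)) has_real_derivative exp (- b)) (at b)"
      by (auto intro!: derivative_eq_intros)
    show "0 \<le> exp (- b)" by simp
  next
    show "((\<lambda>b::real. - exp (- b)) \<longlongrightarrow> 0) at_top" by real_asymp
  qed
  then show ?thesis by simp
qed

abbreviation ed :: "real \<Rightarrow> real" where "ed \<equiv> exponential_density 1"

lemma ed_eq: "ed b = (if b < 0 then 0 else exp (- b))"
  by (simp add: exponential_density_def)

lemma ibp:
  assumes a: "0 \<le> a" and x: "0 < x"
  shows "(\<integral>\<^sup>+b. ennreal (ed b) * ennreal (ln (1 + a * b / x)) \<partial>lborel)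
       = (\<integral>\<^sup>+w. ennreal (ed w) * ennreal (a / (x + a * w)) \<partial>lborel)"
proof -
  define f where "f = (\<lambda>w. a / (x + a * w))"
  define F where "F = (\<lambda>b w. ennreal (ed b) * ennreal (if 0 \<le> w \<and> w \<le> b then f w else 0))"
  have Fm: "case_prod F \<in> borel_measurable (lborel \<Otimes>\<^sub>M lborel)"
    unfolding F_def f_def ed_eq by measurable
  have "(\<integral>\<^sup>+b. ennreal (ed b) * ennreal (ln (1 + a * b / x)) \<partial>lborel)
      = (\<integral>\<^sup>+b. (\<integral>\<^sup>+w. F b w \<partial>lborel) \<partial>lborel)"
  proof (rule nn_integral_cong)
    fix b :: real
    show "ennreal (ed b) * ennreal (ln (1 + a * b / x)) = (\<integral>\<^sup>+w. F b w \<partial>lborel)"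
    proof (cases "0 \<le> b")
      case True
      have "ennreal (ed b) * ennreal (ln (1 + a * b / x))
          = ennreal (ed b) * (\<integral>\<^sup>+w. ennreal (indicator {0..b} w * f w) \<partial>lborel)"
        using ln_as_nn[OF a x True] by (simp add: f_def)
      also have "\<dots> = (\<integral>\<^sup>+w. ennreal (ed b) * ennreal (indicator {0..b} w * f w) \<partial>lborel)"
        by (rule nn_integral_cmult[symmetric]) (simp add: f_def)
      also have "\<dots> = (\<integral>\<^sup>+w. F b w \<partial>lborel)"
        by (intro nn_integral_cong) (simp add: F_def indicator_def)
      finally show ?thesis .
    next
      case False
      then show ?thesis by (simp add: F_def ed_eq)
    qed
  qed
  also have "\<dots> = (\<integral>\<^sup>+w. (\<integral>\<^sup>+b. F b w \<partial>lborel) \<partial>lborel)"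
    by (rule lborel_pair.Fubini'[OF Fm, symmetric])
  also have "\<dots> = (\<integral>\<^sup>+w. ennreal (ed w) * ennreal (f w) \<partial>lborel)"
  proof (rule nn_integral_cong)
    fix w :: real
    show "(\<integral>\<^sup>+b. F b w \<partial>lborel) = ennreal (ed w) * ennreal (f w)"
    proof (cases "0 \<le> w")
      case True
      have fw: "0 \<le> f w" using True a x by (simp add: f_def)
      have "(\<integral>\<^sup>+b. F b w \<partial>lborel) = (\<integral>\<^sup>+b. ennreal (f w) * (ennreal (exp (- b)) * indicator {w..} b) \<partial>lborel)"
        using True by (intro nn_integral_cong) (auto simp: F_def ed_eq indicator_def mult.commute)
      also have "\<dots> = ennreal (f w) * (\<integral>\<^sup>+b. ennreal (exp (- b)) * indicator {w..} b \<partial>lborel)"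
        by (rule nn_integral_cmult) simp
      also have "\<dots> = ennreal (f w) * ennreal (exp (- w))" using exp_tail[OF True] by simp
      also have "\<dots> = ennreal (ed w) * ennreal (f w)" using True by (simp add: ed_eq mult.commute)
      finally show ?thesis .
    next
      case False
      then show ?thesis by (simp add: F_def ed_eq)
    qed
  qed
  finally show ?thesis unfolding f_def .
qed

lemma H_meas [measurable]: "(\<lambda>p. H x (fst p) (snd p)) \<in> borel_measurable (lborel \<Otimes>\<^sub>M lborel)"
  unfolding H_def by measurable

lemma H_nonneg: "0 < x \<Longrightarrow> 0 \<le> H x u v"
  by (auto simp: H_def indicator_def intro!: divide_nonneg_pos add_pos_nonneg)

lemma H_integrable:
  assumes x: "0 < x"
  shows "integrable lborel (\<lambda>u. H x u v)"
proof (rule Bochner_Integration.integrable_bound)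
  show "integrable lborel (\<lambda>u. (\<bar>v\<bar> * exp (- v) / x) * exp (- (1 * \<bar>u\<bar>)))"
    by (intro integrable_mult_right integrable_exp_abs) simp
  show "(\<lambda>u. H x u v) \<in> borel_measurable lborel" unfolding H_def by measurable
  show "AE u in lborel. norm (H x u v) \<le> norm ((\<bar>v\<bar> * exp (- v) / x) * exp (- (1 * \<bar>u\<bar>)))"
  proof (rule AE_I2)
    fix u
    show "norm (H x u v) \<le> norm ((\<bar>v\<bar> * exp (- v) / x) * exp (- (1 * \<bar>u\<bar>)))"
    proof (cases "0 < u \<and> 0 < v")
      case True
      then have "H x u v = exp (- u) * exp (- v) * v / (u * v + x)" by (simp add: H_def)
      also have "\<dots> \<le> exp (- u) * exp (- v) * v / x"
        using True x by (intro divide_left_mono) (auto intro!: mult_pos_pos add_pos_pos)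
      finally show ?thesis using True x H_nonneg[OF x, of u v] by (simp add: field_simps)
    next
      case False
      then have "H x u v = 0" by (auto simp: H_def indicator_def)
      then show ?thesis by simp
    qed
  qed
qed

lemma H_side:
  assumes x: "0 < x"
  shows "(\<integral>v. (\<integral>u. H x u v \<partial>lborel) \<partial>lborel)
       = enn2real (\<integral>\<^sup>+a. ennreal (ed a) * (\<integral>\<^sup>+w. ennreal (ed w) * ennreal (a / (x + a * w)) \<partial>lborel) \<partial>lborel)"
proof -
  have Hnn: "(\<integral>\<^sup>+u. ennreal (H x u v) \<partial>lborel) = ennreal (\<integral>u. H x u v \<partial>lborel)" for v
    using H_integrable[OF x] H_nonneg[OF x] by (intro nn_integral_eq_integral) auto
  have "(\<integral>v. (\<integral>u. H x u v \<partial>lborel) \<partial>lborel) = enn2real (\<integral>\<^sup>+v. ennreal (\<integral>u. H x u v \<partial>lborel) \<partial>lborel)"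
  proof (rule integral_eq_nn_integral)
    show "(\<lambda>v. \<integral>u. H x u v \<partial>lborel) \<in> borel_measurable lborel" unfolding H_def by measurable
    show "AE v in lborel. 0 \<le> (\<integral>u. H x u v \<partial>lborel)"
      using H_nonneg[OF x] by (intro AE_I2 integral_nonneg) auto
  qed
  also have "(\<integral>\<^sup>+v. ennreal (\<integral>u. H x u v \<partial>lborel) \<partial>lborel) = (\<integral>\<^sup>+v. (\<integral>\<^sup>+u. ennreal (H x u v) \<partial>lborel) \<partial>lborel)"
    by (simp add: Hnn)
  also have "\<dots> = (\<integral>\<^sup>+a. ennreal (ed a) * (\<integral>\<^sup>+w. ennreal (ed w) * ennreal (a / (x + a * w)) \<partial>lborel) \<partial>lborel)"
  proof (rule nn_integral_cong)
    fix v :: real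
    show "(\<integral>\<^sup>+u. ennreal (H x u v) \<partial>lborel) = ennreal (ed v) * (\<integral>\<^sup>+w. ennreal (ed w) * ennreal (v / (x + v * w)) \<partial>lborel)"
    proof (cases "0 < v")
      case True
      have "ennreal (ed v) * (\<integral>\<^sup>+w. ennreal (ed w) * ennreal (v / (x + v * w)) \<partial>lborel)
          = (\<integral>\<^sup>+w. ennreal (ed v) * (ennreal (ed w) * ennreal (v / (x + v * w))) \<partial>lborel)"
        by (rule nn_integral_cmult[symmetric]) (simp add: ed_eq)
      also have "\<dots> = (\<integral>\<^sup>+u. ennreal (H x u v) \<partial>lborel)"
      proof (rule nn_integral_cong_AE)
        show "AE w in lborel. ennreal (ed v) * (ennreal (ed w) * ennreal (v / (x + v * w))) = ennreal (H x w v)"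
          using AE_lborel_singleton[of 0]
        proof eventually_elim
          case (elim w)
          show ?case
          proof (cases "w < 0")
            case True then show ?thesis by (simp add: ed_eq H_def)
          next
            case False
            with elim have w: "0 < w" by simp
            have "ennreal (ed v) * (ennreal (ed w) * ennreal (v / (x + v * w)))
                = ennreal (exp (- v) * (exp (- w) * (v / (x + v * w))))"
            proof -
              have q: "0 \<le> v / (x + v * w)" using w \<open>0 < v\<close> x by simp
              have "ennreal (exp (- w)) * ennreal (v / (x + v * w)) = ennreal (exp (- w) * (v / (x + v * w)))"
                using q by (rule ennreal_mult[symmetric, rotated]) simp
              moreover have "ennreal (exp (- v)) * ennreal (exp (- w) * (v / (x + v * w)))
                  = ennreal (exp (- v) * (exp (- w) * (v / (x + v * w))))"
                using q by (intro ennreal_mult[symmetric] mult_nonneg_nonneg) auto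
              ultimately show ?thesis using w \<open>0 < v\<close> by (simp add: ed_eq)
            qed
            also have "exp (- v) * (exp (- w) * (v / (x + v * w))) = H x w v"
              using w \<open>0 < v\<close> by (simp add: H_def field_simps)
            finally show ?thesis .
          qed
        qed
      qed
      finally show ?thesis by simp
    next
      case False
      then have "H x u v = 0" for u by (auto simp: H_def indicator_def)
      moreover have "ennreal (ed v) * (\<integral>\<^sup>+w. ennreal (ed w) * ennreal (v / (x + v * w)) \<partial>lborel) = 0"
      proof (cases "v = 0")
        case True then show ?thesis by simp
      next
        case False then show ?thesis using \<open>\<not> 0 < v\<close> by (simp add: ed_eq)
      qed
      ultimately show ?thesis by simp
    qed
  qed
  finally show ?thesis .
qed

lemma prob_side:
  fixes M :: "'a measure" and X Y :: "'a \<Rightarrow> real"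
  assumes P: "prob_space M"
    and ind: "prob_space.indep_var M borel X borel Y"
    and dX: "distributed M lborel X (exponential_density 1)"
    and dY: "distributed M lborel Y (exponential_density 1)"
    and nX: "\<And>\<omega>. 0 \<le> X \<omega>" and nY: "\<And>\<omega>. 0 \<le> Y \<omega>"
    and x: "0 < x"
  shows "(\<integral>\<omega>. ln (1 + X \<omega> * Y \<omega> / x) \<partial>M)
       = enn2real (\<integral>\<^sup>+a. ennreal (ed a) * (\<integral>\<^sup>+w. ennreal (ed w) * ennreal (a / (x + a * w)) \<partial>lborel) \<partial>lborel)"
proof -
  interpret prob_space M by fact
  define D where "D = density lborel (exponential_density 1)"
  interpret D: prob_space D unfolding D_def using prob_space_exponential_density[of 1] by simp
  have Xm [measurable]: "X \<in> borel_measurable M" using distributed_measurable[OF dX] by simp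
  have Ym [measurable]: "Y \<in> borel_measurable M" using distributed_measurable[OF dY] by simp
  have dXe: "distr M borel X = D"
  proof -
    have "distr M borel X = distr M lborel X" by (rule distr_cong) auto
    also have "\<dots> = D" using dX by (simp add: distributed_def D_def)
    finally show ?thesis .
  qed
  have dYe: "distr M borel Y = D"
  proof -
    have "distr M borel Y = distr M lborel Y" by (rule distr_cong) auto
    also have "\<dots> = D" using dY by (simp add: distributed_def D_def)
    finally show ?thesis .
  qed
  have joint: "distr M (borel \<Otimes>\<^sub>M borel) (\<lambda>\<omega>. (X \<omega>, Y \<omega>)) = D \<Otimes>\<^sub>M D"
    using ind unfolding indep_var_distribution_eq dXe dYe by simp
  define g where "g = (\<lambda>p::real \<times> real. ln (1 + fst p * snd p / x))"
  have gm [measurable]: "g \<in> borel_measurable (borel \<Otimes>\<^sub>M borel)" unfolding g_def by measurable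
  have gnn: "0 \<le> g (X \<omega>, Y \<omega>)" for \<omega>
    using nX[of \<omega>] nY[of \<omega>] x by (simp add: g_def)
  have "(\<integral>\<omega>. ln (1 + X \<omega> * Y \<omega> / x) \<partial>M) = (\<integral>\<omega>. g (X \<omega>, Y \<omega>) \<partial>M)"
    by (simp add: g_def)
  also have "\<dots> = enn2real (\<integral>\<^sup>+\<omega>. ennreal (g (X \<omega>, Y \<omega>)) \<partial>M)"
    using gnn by (intro integral_eq_nn_integral) auto
  also have "(\<integral>\<^sup>+\<omega>. ennreal (g (X \<omega>, Y \<omega>)) \<partial>M)
      = (\<integral>\<^sup>+p. ennreal (g p) \<partial>distr M (borel \<Otimes>\<^sub>M borel) (\<lambda>\<omega>. (X \<omega>, Y \<omega>)))"
    by (rule nn_integral_distr[symmetric]) auto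
  also have "\<dots> = (\<integral>\<^sup>+p. ennreal (g p) \<partial>(D \<Otimes>\<^sub>M D))" unfolding joint ..
  also have "\<dots> = (\<integral>\<^sup>+a. (\<integral>\<^sup>+b. ennreal (g (a, b)) \<partial>D) \<partial>D)"
    by (rule D.nn_integral_fst[symmetric]) (simp add: D_def)
  also have "\<dots> = (\<integral>\<^sup>+a. ennreal (ed a) * (\<integral>\<^sup>+b. ennreal (ed b) * ennreal (g (a, b)) \<partial>lborel) \<partial>lborel)"
    unfolding D_def
    by (subst nn_integral_density; simp add: nn_integral_density)
  also have "\<dots> = (\<integral>\<^sup>+a. ennreal (ed a) * (\<integral>\<^sup>+w. ennreal (ed w) * ennreal (a / (x + a * w)) \<partial>lborel) \<partial>lborel)"
  proof (rule nn_integral_cong)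
    fix a :: real
    show "ennreal (ed a) * (\<integral>\<^sup>+b. ennreal (ed b) * ennreal (g (a, b)) \<partial>lborel)
        = ennreal (ed a) * (\<integral>\<^sup>+w. ennreal (ed w) * ennreal (a / (x + a * w)) \<partial>lborel)"
    proof (cases "0 \<le> a")
      case True
      then show ?thesis using ibp[OF True x] by (simp add: g_def)
    next
      case False
      then show ?thesis by (simp add: ed_eq)
    qed
  qed
  finally show ?thesis .
qed


lemma sep_c:
  defines "c \<equiv> SOME c. separating_line c 3 1 [0] [0, 0, 1]"
  shows "-1 < c \<and> c < 0"
proof -
  have "separating_line (-1/2) 3 1 [0] [0, 0, 1]"
    by (auto simp: separating_line_def less_Suc_eq numeral_3_eq_3)
  then have "separating_line c 3 1 [0] [0, 0, 1]" unfolding c_def by (rule someI)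
  then have h: "\<forall>j<3. c < Re ([0, 0, 1::complex] ! j)" "Re ([0::complex] ! 0) - 1 < c"
    unfolding separating_line_def by auto
  from h(1) have "c < Re ([0, 0, 1::complex] ! 0)" by (metis zero_less_numeral)
  with h(2) show ?thesis by simp
qed

theorem corollary2:
  fixes M :: "'a measure" and h_rd h_ru :: "'a \<Rightarrow> complex"
    and \<delta> T \<Xi> d_t \<alpha>_r R_est :: real
  assumes "prob_space M"
    and "h_rd \<in> borel_measurable M" and "h_ru \<in> borel_measurable M"
    and "prob_space.indep_var M borel h_rd borel h_ru"
    and "distributed M lborel (\<lambda>\<omega>. (cmod (h_rd \<omega>))^2) (exponential_density 1)"
    and "distributed M lborel (\<lambda>\<omega>. (cmod (h_ru \<omega>))^2) (exponential_density 1)"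
    and "0 < \<delta>" and "0 < T" and "0 < \<Xi>" and "0 < d_t" and "0 < \<alpha>_r"
    and "R_est = \<delta> / (2 * T) *
           (\<integral>\<omega>. log 2 (1 + \<Xi> * d_t powr (- \<alpha>_r) * ((cmod (h_rd \<omega>))^2 * (cmod (h_ru \<omega>))^2)) \<partial>M)"
  shows "complex_of_real R_est =
           complex_of_real (\<delta> / (2 * T * ln 2)) *
           meijerG 3 1 [0] [0, 0, 1] (d_t powr \<alpha>_r * inverse \<Xi>)"
proof -
  note P = assms(1)
  interpret prob_space M by (fact P)
  define x where "x = d_t powr \<alpha>_r * inverse \<Xi>"
  have x: "0 < x" unfolding x_def using assms by simp
  define X where "X = (\<lambda>\<omega>. (cmod (h_rd \<omega>))^2)"
  define Y where "Y = (\<lambda>\<omega>. (cmod (h_ru \<omega>))^2)"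
  define c where "c = (SOME c. separating_line c 3 1 [0] [0, 0, 1])"
  have c: "-1 < c" "c < 0" using sep_c unfolding c_def by auto
  define W where "W = (\<integral>v. (\<integral>u. H x u v \<partial>lborel) \<partial>lborel)"
  have G: "meijerG 3 1 [0] [0, 0, 1] x = of_real W"
  proof -
    have "meijerG 3 1 [0] [0, 0, 1] x = complex_of_real (1 / (2 * pi)) *
       (\<integral>t. meijerG_integrand 3 1 [0] [0, 0, 1] x (Complex c t) \<partial>lborel)"
      unfolding meijerG_def meijerG_line_def c_def ..
    also have "\<dots> = complex_of_real (1 / (2 * pi)) * of_real (2 * pi * W)"
      unfolding W_def using lhs_integral[OF c x] by simp
    also have "\<dots> = of_real (1 / (2 * pi) * (2 * pi * W))" by (subst of_real_mult) simp
    also have "\<dots> = of_real W" by simp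
    finally show ?thesis .
  qed
  have ind: "indep_var borel X borel Y"
    using indep_var_compose[OF assms(4), of "\<lambda>z. (cmod z)^2" borel "\<lambda>z. (cmod z)^2" borel]
    by (simp add: X_def Y_def comp_def)
  have E: "(\<integral>\<omega>. ln (1 + X \<omega> * Y \<omega> / x) \<partial>M) = W"
    unfolding W_def H_side[OF x]
    by (rule prob_side[OF P ind _ _ _ _ x]) (use assms(5,6) in \<open>auto simp: X_def Y_def\<close>)
  have K: "\<Xi> * d_t powr (- \<alpha>_r) = 1 / x"
    unfolding x_def using assms by (simp add: powr_minus field_simps)
  have "(\<integral>\<omega>. log 2 (1 + \<Xi> * d_t powr (- \<alpha>_r) * ((cmod (h_rd \<omega>))^2 * (cmod (h_ru \<omega>))^2)) \<partial>M)
      = (\<integral>\<omega>. ln (1 + X \<omega> * Y \<omega> / x) / ln 2 \<partial>M)"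
    unfolding K by (simp add: X_def Y_def log_def)
  also have "\<dots> = W / ln 2" using E by simp
  finally have "R_est = \<delta> / (2 * T) * (W / ln 2)" using assms(12) by simp
  then have "R_est = \<delta> / (2 * T * ln 2) * W" by simp
  then show ?thesis unfolding G x_def[symmetric] by simp
qed

end
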